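(* Let $M$ be a three-dimensional warped product space with Euclidean coordinates $(z^1,z^2,z^3)$ on the underlying $\mathbb{R}^3$, and let $\vec r$ be a surface in $M$ (with position vector $\vec r$). For $\alpha=1,2,3$ let $E_\alpha=\frac{\partial}{\partial z^\alpha}\times_E\vec r$, where $\times_E$ is the Euclidean cross product. Then each $E_\alpha$ satisfies $$\vec r_i\cdot D_jE_\alpha+\vec r_j\cdot D_iE_\alpha=0\quad\text{for all }i,j,$$ and moreover $E_\alpha=\frac{\partial}{\partial z^\alpha}\times X$, where $X=rf(r)\frac{\partial}{\partial r}$ and $\times$ is the cross product induced by the warped metric (with the same orientation).
   Context: A three-dimensional warped product space is (a region of) $\mathbb{R}^3$ with polar coordinates $(r,\theta)$ and metric $ds^2=\frac{1}{f(r)^2}dr^2+r^2dS_2^2$ ($dS_2^2$ round metric, $f$ smooth and positive); $\cdot$ is this metric, $D$ its Levi-Civita connection, $\vec r_i=\partial \vec r/\partial x^i$ in local coordinates on the surface. The cross product $\times$ induced by $\cdot$ is the unique bilinear map with $a\times b\perp a,b$, $|a\times b|^2=|a|^2|b|^2-(a\cdot b)^2$, and $(a,b,a\times b)$ positively oriented for independent $a,b$. *)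

theory Defs
  imports "HOL-Analysis.Analysis" "HOL-Analysis.Cross3"
begin

text \<open>A Riemannian metric on (a region of) R^3 in the Euclidean coordinates z,
  given pointwise as a bilinear form: g p v w.\<close>

type_synonym metric3 = "real^3 \<Rightarrow> real^3 \<Rightarrow> real^3 \<Rightarrow> real"

text \<open>The warped product metric ds^2 = dr^2/f(r)^2 + r^2 dS_2^2, written in the
  Euclidean coordinates z (r = norm z, dr = (z/r) . dz, r^2 dS^2 = |dz|^2 - dr^2).\<close>
definition warped_metric :: "(real \<Rightarrow> real) \<Rightarrow> metric3" where
  "warped_metric f p v w =
     (1 / (f (norm p))\<^sup>2) * ((p \<bullet> v) * (p \<bullet> w)) / (norm p)\<^sup>2
     + (v \<bullet> w - ((p \<bullet> v) * (p \<bullet> w)) / (norm p)\<^sup>2)"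

definition metric_matrix :: "metric3 \<Rightarrow> real^3 \<Rightarrow> real^3^3" where
  "metric_matrix g p = (\<chi> i j. g p (axis i 1) (axis j 1))"

definition metric_deriv :: "metric3 \<Rightarrow> real^3 \<Rightarrow> real^3 \<Rightarrow> real^3 \<Rightarrow> real^3 \<Rightarrow> real" where
  "metric_deriv g p u a b = frechet_derivative (\<lambda>q. g q a b) (at p) u"

definition christoffel :: "metric3 \<Rightarrow> real^3 \<Rightarrow> real^3 \<Rightarrow> real^3 \<Rightarrow> real^3" where
  "christoffel g p v w =
     (\<chi> k. (1/2) * (\<Sum>l\<in>UNIV. matrix_inv (metric_matrix g p) $ k $ l *
        (metric_deriv g p v w (axis l 1) + metric_deriv g p w v (axis l 1)
         - metric_deriv g p (axis l 1) v w)))"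

definition lc_deriv :: "metric3 \<Rightarrow> (real^3 \<Rightarrow> real^3) \<Rightarrow> real^3 \<Rightarrow> real^3 \<Rightarrow> real^3" where
  "lc_deriv g E p v = frechet_derivative E (at p) v + christoffel g p v (E p)"

definition metric_cross :: "metric3 \<Rightarrow> real^3 \<Rightarrow> real^3 \<Rightarrow> real^3 \<Rightarrow> real^3" where
  "metric_cross g p a b =
     (THE c. g p c a = 0 \<and> g p c b = 0 \<and>
             g p c c = g p a a * g p b b - (g p a b)\<^sup>2 \<and>
             (\<not> dependent {a, b} \<and> a \<noteq> b \<longrightarrow> det (vector [a, b, c] :: real^3^3) > 0))"

definition surf_partial :: "(real^2 \<Rightarrow> real^3) \<Rightarrow> real^2 \<Rightarrow> 2 \<Rightarrow> real^3" where
  "surf_partial r x i = frechet_derivative r (at x) (axis i 1)"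

end

theory Submission
  imports Defs
begin


definition phi :: "(real\<Rightarrow>real) \<Rightarrow> real \<Rightarrow> real" where
  "phi f = (\<lambda>s. 1/(f s)^2/s^2 - 1/s^2)"

lemma wm_form: "warped_metric f p v w = phi f (norm p) * ((p\<bullet>v)*(p\<bullet>w)) + v\<bullet>w"
  unfolding warped_metric_def phi_def by (simp add: divide_inverse algebra_simps)

lemma phi_deriv:
  assumes "f field_differentiable (at s)" "f s > 0" "s > 0"
  shows "\<exists>D. (phi f has_field_derivative D) (at s)"
proof -
  obtain f' where "(f has_field_derivative f') (at s)" using assms(1) field_differentiable_def by blast
  then show ?thesis unfolding phi_def
    by (intro exI) (rule derivative_eq_intros refl | use assms in simp)+
qed

lemma phinorm_deriv:
  assumes "f field_differentiable (at (norm p))" "f (norm p) > 0" "norm p > 0"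
  shows "\<exists>c. ((\<lambda>q. phi f (norm q)) has_derivative (\<lambda>h. c * (p \<bullet> h))) (at p)"
proof -
  obtain D where D: "(phi f has_field_derivative D) (at (norm p))" using phi_deriv assms by blast
  have n: "(norm has_derivative (\<lambda>h. h \<bullet> sgn p)) (at p)" using has_derivative_norm[of p] assms by simp
  have "((\<lambda>q. phi f (norm q)) has_derivative (\<lambda>h. D * (h \<bullet> sgn p))) (at p)"
    using has_derivative_compose[OF n D[unfolded has_field_derivative_def]] by (simp add: o_def)
  moreover have "(\<lambda>h. D * (h \<bullet> sgn p)) = (\<lambda>h. (D / norm p) * (p \<bullet> h))"
    by (auto simp: sgn_div_norm inner_commute divide_inverse)
  ultimately show ?thesis by metis
qed

lemma mderiv:
  assumes "f field_differentiable (at (norm p))" "f (norm p) > 0" "norm p > 0"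
  shows "\<exists>c. \<forall>h a b. metric_deriv (warped_metric f) p h a b
     = c*(p\<bullet>h)*((p\<bullet>a)*(p\<bullet>b)) + phi f (norm p) * ((h\<bullet>a)*(p\<bullet>b) + (p\<bullet>a)*(h\<bullet>b))"
proof -
  obtain c where c: "((\<lambda>q. phi f (norm q)) has_derivative (\<lambda>h. c * (p \<bullet> h))) (at p)"
    using phinorm_deriv assms by blast
  have ia: "((\<lambda>q. q \<bullet> a) has_derivative (\<lambda>h. h \<bullet> a)) (at p)" for a :: "real^3"
    using has_derivative_inner[OF has_derivative_ident has_derivative_const[of a]] by simp
  have "\<forall>h. metric_deriv (warped_metric f) p h a b
     = c*(p\<bullet>h)*((p\<bullet>a)*(p\<bullet>b)) + phi f (norm p) * ((h\<bullet>a)*(p\<bullet>b) + (p\<bullet>a)*(h\<bullet>b))" for a b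
  proof -
    have d: "((\<lambda>q. warped_metric f q a b) has_derivative
      (\<lambda>h. (phi f (norm p) * ((p\<bullet>a) * (h\<bullet>b) + (h\<bullet>a) * (p\<bullet>b)) + c * (p \<bullet> h) * ((p\<bullet>a)*(p\<bullet>b))) + 0)) (at p)"
      unfolding wm_form
      by (intro has_derivative_add has_derivative_mult c ia has_derivative_const)
    show ?thesis unfolding metric_deriv_def frechet_derivative_at[OF d, symmetric]
      by (simp add: algebra_simps)
  qed
  then show ?thesis by blast
qed

lemma gmat: "warped_metric f p u x = u \<bullet> (metric_matrix (warped_metric f) p *v x)"
proof -
  have "metric_matrix (warped_metric f) p *v x = (phi f (norm p) * (p \<bullet> x)) *\<^sub>R p + x"
  proof -
    have "metric_matrix (warped_metric f) p = (\<chi> i j. phi f (norm p) * (p$i) * (p$j) + (if i = j then 1 else 0))"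
      unfolding metric_matrix_def wm_form by (simp add: vec_eq_iff inner_axis inner_axis_axis) (simp add: axis_def)
    then show ?thesis
      by (simp add: vec_eq_iff forall_3 matrix_vector_mult_def sum_3 inner_vec_def algebra_simps)
  qed
  then show ?thesis by (simp add: wm_form inner_add_right algebra_simps inner_commute)
qed

lemma gpos:
  assumes "f (norm p) > 0" "norm p > 0" "x \<noteq> 0"
  shows "warped_metric f p x x > 0"
proof -
  let ?s = "norm p" and ?F = "f (norm p)"
  have cs: "(p \<bullet> x)^2 \<le> ?s^2 * (x\<bullet>x)" using Cauchy_Schwarz_ineq[of p x]
    by (simp add: power2_norm_eq_inner)
  have e: "warped_metric f p x x = (p\<bullet>x)^2 / (?F^2 * ?s^2) + (x\<bullet>x - (p\<bullet>x)^2/?s^2)"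
    unfolding wm_form phi_def by (simp add: field_simps power2_eq_square)
  have "x\<bullet>x - (p\<bullet>x)^2/?s^2 \<ge> 0" using cs assms by (simp add: field_simps)
  moreover have "x \<bullet> x > 0" using assms by simp
  moreover have "?F^2 * ?s^2 > 0" using assms by simp
  ultimately show ?thesis unfolding e
    by (cases "p \<bullet> x = 0") (auto intro!: add_pos_nonneg divide_pos_pos mult_pos_pos simp: assms)
qed

lemma ginv:
  assumes "f (norm p) > 0" "norm p > 0"
  shows "metric_matrix (warped_metric f) p ** matrix_inv (metric_matrix (warped_metric f) p) = mat 1"
proof -
  let ?G = "metric_matrix (warped_metric f) p"
  have "\<forall>x. ?G *v x = 0 \<longrightarrow> x = 0"
  proof (intro allI impI, rule ccontr)
    fix x assume "?G *v x = 0" "x \<noteq> 0"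
    then show False using gpos[of f p x] assms gmat[of f p x x] by simp
  qed
  then have "invertible ?G" using matrix_left_invertible_ker invertible_left_inverse by blast
  then show ?thesis unfolding invertible_def matrix_inv_def by (rule someI_ex[THEN conjunct1])
qed

lemma chris:
  assumes "f field_differentiable (at (norm p))" "f (norm p) > 0" "norm p > 0"
  shows "\<exists>c. \<forall>u v w. warped_metric f p u (christoffel (warped_metric f) p v w)
     = (1/2) * (c*(p\<bullet>v)*(p\<bullet>w) + 2*phi f (norm p)*(v\<bullet>w)) * (p\<bullet>u)"
proof -
  obtain c where c: "\<forall>h a b. metric_deriv (warped_metric f) p h a b
     = c*(p\<bullet>h)*((p\<bullet>a)*(p\<bullet>b)) + phi f (norm p) * ((h\<bullet>a)*(p\<bullet>b) + (p\<bullet>a)*(h\<bullet>b))"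
    using mderiv assms by blast
  let ?G = "metric_matrix (warped_metric f) p"
  have T: "metric_deriv (warped_metric f) p v w (axis l 1) + metric_deriv (warped_metric f) p w v (axis l 1)
         - metric_deriv (warped_metric f) p (axis l 1) v w
        = (c*(p\<bullet>v)*(p\<bullet>w) + 2*phi f (norm p)*(v\<bullet>w)) * p $ l" for v w l
    by (simp add: c inner_axis inner_axis' inner_commute algebra_simps)
  have "christoffel (warped_metric f) p v w
     = matrix_inv ?G *v ((1/2 * (c*(p\<bullet>v)*(p\<bullet>w) + 2*phi f (norm p)*(v\<bullet>w))) *\<^sub>R p)" for v w
    unfolding christoffel_def T
    by (simp add: vec_eq_iff matrix_vector_mult_def sum_distrib_left algebra_simps)
  then have "warped_metric f p u (christoffel (warped_metric f) p v w)
     = (1/2) * (c*(p\<bullet>v)*(p\<bullet>w) + 2*phi f (norm p)*(v\<bullet>w)) * (p\<bullet>u)" for u v w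
    by (simp add: gmat[of f p u] matrix_vector_mul_assoc ginv[of f p, OF assms(2,3)] inner_commute)
  then show ?thesis by blast
qed

lemma cross_fd: "frechet_derivative (\<lambda>z. cross3 e z) (at p) v = cross3 e v"
proof -
  have "linear (\<lambda>z. cross3 e z)" using bilinear_cross unfolding bilinear_def by blast
  then have "((\<lambda>z. cross3 e z) has_derivative (\<lambda>z. cross3 e z)) (at p)"
    by (rule linear_imp_has_derivative)
  then show ?thesis by (metis frechet_derivative_at)
qed

lemma killing:
  assumes "f field_differentiable (at (norm p))" "f (norm p) > 0" "norm p > 0"
  shows "warped_metric f p u (lc_deriv (warped_metric f) (\<lambda>z. cross3 e z) p v)
       + warped_metric f p v (lc_deriv (warped_metric f) (\<lambda>z. cross3 e z) p u) = 0"
proof -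
  obtain c where c: "\<forall>u v w. warped_metric f p u (christoffel (warped_metric f) p v w)
     = (1/2) * (c*(p\<bullet>v)*(p\<bullet>w) + 2*phi f (norm p)*(v\<bullet>w)) * (p\<bullet>u)"
    using chris assms by blast
  have add: "warped_metric f p a (x + y) = warped_metric f p a x + warped_metric f p a y" for a x y
    by (simp add: wm_form inner_add_right algebra_simps)
  have t0: "p \<bullet> cross3 e p = 0" by (simp add: dot_cross_self)
  have t1: "u \<bullet> cross3 e v + v \<bullet> cross3 e u = 0" by (simp add: cross3_simps)
  have t2: "p \<bullet> cross3 e v = - (v \<bullet> cross3 e p)" for v by (simp add: cross3_simps)
  have t3: "v \<bullet> cross3 e u = - (u \<bullet> cross3 e v)" using t1 by simp
  have c1: "warped_metric f p a (christoffel (warped_metric f) p b (cross3 e p))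
     = (1/2) * (c*(p\<bullet>b)*(p\<bullet>cross3 e p) + 2*phi f (norm p)*(b\<bullet>cross3 e p)) * (p\<bullet>a)" for a b
    using c by blast
  show ?thesis
    unfolding lc_deriv_def cross_fd add c1
    by (simp add: wm_form t0 t2[of u] t2[of v] t3 algebra_simps)
qed



lemma indep_cross:
  fixes a b :: "real^3"
  shows "(\<not> dependent {a, b} \<and> a \<noteq> b) \<longleftrightarrow> cross3 a b \<noteq> 0"
proof
  assume H: "\<not> dependent {a, b} \<and> a \<noteq> b"
  show "cross3 a b \<noteq> 0"
  proof
    assume C: "cross3 a b = 0"
    have "a \<noteq> 0" using H dependent_zero by blast
    have "cross3 a (cross3 a b) = (a \<bullet> b) *\<^sub>R a - (a \<bullet> a) *\<^sub>R b" by (rule Lagrange)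
    then have "(a \<bullet> a) *\<^sub>R b = (a \<bullet> b) *\<^sub>R a" using C by simp
    then have "b = ((a \<bullet> b) / (a \<bullet> a)) *\<^sub>R a"
    proof -
      assume eq: "(a \<bullet> a) *\<^sub>R b = (a \<bullet> b) *\<^sub>R a"
      have "b = (1 / (a \<bullet> a)) *\<^sub>R ((a \<bullet> a) *\<^sub>R b)" using \<open>a \<noteq> 0\<close> by simp
      also have "\<dots> = ((a \<bullet> b) / (a \<bullet> a)) *\<^sub>R a" unfolding eq by simp
      finally show ?thesis .
    qed
    then have "b \<in> span {a}" by (metis span_base span_mul singletonI)
    moreover have "{a, b} - {b} = {a}" using H by auto
    ultimately have "dependent {a, b}" unfolding dependent_def by force
    then show False using H by blast
  qed
next
  assume C: "cross3 a b \<noteq> 0"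
  show "\<not> dependent {a, b} \<and> a \<noteq> b"
  proof
    show "a \<noteq> b" using C by auto
    show "\<not> dependent {a, b}"
    proof
      assume "dependent {a, b}"
      then obtain x where x: "x \<in> {a, b}" "x \<in> span ({a, b} - {x})" unfolding dependent_def by blast
      show False
      proof (cases "x = a")
        case True
        then have "a \<in> span {b}" using x \<open>a \<noteq> b\<close> by (simp add: insert_Diff_if)
        then obtain k where "a = k *\<^sub>R b" by (auto simp: span_singleton)
        then show False using C by (simp add: cross_mult_left)
      next
        case False
        then have "x = b" using x by auto
        then have "b \<in> span {a}" using x \<open>a \<noteq> b\<close> by (simp add: insert_Diff_if)
        then obtain k where "b = k *\<^sub>R a" by (auto simp: span_singleton)
        then show False using C by (simp add: cross_mult_right)
      qed
    qed
  qed
qed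



lemma part2:
  assumes Fp: "f (norm z) > 0" and sp: "norm z > 0"
  shows "cross3 e z = metric_cross (warped_metric f) z e (f (norm z) *\<^sub>R z)"
proof -
  define F where "F = f (norm z)"
  define s where "s = norm z"
  define n where "n = cross3 e z"
  define b where "b = F *\<^sub>R z"
  define g where "g = warped_metric f z"
  have F0: "F > 0" and s0: "s > 0" using Fp sp F_def s_def by auto
  have zz: "z \<bullet> z = s^2" by (simp add: s_def power2_norm_eq_inner)
  have hphi: "phi f (norm z) * s^2 + 1 = 1/F^2"
    using s0 unfolding phi_def F_def s_def by (simp add: field_simps)
  have gorth: "g x y = x \<bullet> y" if "z \<bullet> x = 0" for x y
    using that by (simp add: g_def wm_form)
  have gz: "g x b = (z \<bullet> x) / F" for x
  proof -
    have "g x b = F * ((z\<bullet>x) * (phi f (norm z) * s^2 + 1))"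
      unfolding g_def wm_form b_def by (simp add: zz algebra_simps inner_commute)
    also have "\<dots> = (z \<bullet> x) / F" unfolding hphi using F0 by (simp add: power2_eq_square)
    finally show ?thesis .
  qed
  have nz: "z \<bullet> n = 0" by (simp add: n_def dot_cross_self)
  have gee: "g e e = phi f (norm z) * (z\<bullet>e)^2 + e\<bullet>e" by (simp add: g_def wm_form power2_eq_square)
  have gbb: "g b b = s^2"
  proof -
    have "g b b = F^2 * s^2 * (phi f (norm z) * s^2 + 1)"
      unfolding g_def wm_form b_def by (simp add: zz algebra_simps power2_eq_square)
    also have "\<dots> = s^2" unfolding hphi using F0 by (simp add: power2_eq_square)
    finally show ?thesis .
  qed
  have geb: "g e b = (z \<bullet> e) / F" using gz[of e] by (simp add: g_def wm_form inner_commute b_def algebra_simps)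
  have nn: "n \<bullet> n = (e\<bullet>e) * (z\<bullet>z) - (e\<bullet>z)^2"
    unfolding n_def dot_cross by (simp add: power2_eq_square inner_commute)
  have RHS: "g e e * g b b - (g e b)^2 = n \<bullet> n"
  proof -
    have "g e e * g b b - (g e b)^2 = (z \<bullet> e)^2 * (phi f (norm z) * s^2 + 1) + (e \<bullet> e) * s^2 - (z \<bullet> e)^2 - (z \<bullet> e)^2 * (1 / F^2)"
      unfolding gee gbb geb using F0 by (simp add: field_simps power2_eq_square)
    also have "\<dots> = n \<bullet> n" unfolding hphi nn zz by (simp add: inner_commute)
    finally show ?thesis .
  qed
  have eb: "cross3 e b = F *\<^sub>R n" by (simp add: b_def n_def cross_mult_right)
  have det: "det (vector [e, b, c] :: real^3^3) = F * (n \<bullet> c)" for c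
  proof -
    have "det (vector [e, b, c] :: real^3^3) = e \<bullet> cross3 b c" by (simp add: dot_cross_det)
    also have "\<dots> = cross3 e b \<bullet> c" by (metis cross_triple inner_commute)
    finally show ?thesis by (simp add: eb)
  qed
  have indep: "(\<not> dependent {e, b} \<and> e \<noteq> b) \<longleftrightarrow> n \<noteq> 0"
    using indep_cross[of e b] eb F0 by simp
  let ?P = "\<lambda>c. g c e = 0 \<and> g c b = 0 \<and> g c c = g e e * g b b - (g e b)\<^sup>2 \<and>
             (\<not> dependent {e, b} \<and> e \<noteq> b \<longrightarrow> det (vector [e, b, c] :: real^3^3) > 0)"
  have Pn: "?P n"
  proof (intro conjI impI)
    show "g n e = 0" using gorth[OF nz] by (simp add: n_def dot_cross_self)
    show "g n b = 0" using gz nz by simp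
    show "g n n = g e e * g b b - (g e b)\<^sup>2" using gorth[OF nz] RHS by simp
    assume "\<not> dependent {e, b} \<and> e \<noteq> b"
    then have "n \<noteq> 0" using indep by blast
    then show "det (vector [e, b, n] :: real^3^3) > 0" using det F0 by simp
  qed
  have uniq: "c = n" if Pc: "?P c" for c
  proof -
    have zc: "z \<bullet> c = 0" using Pc gz F0 by (simp add: inner_commute)
    have ce: "c \<bullet> e = 0" using Pc gorth[OF zc] by simp
    have cc: "c \<bullet> c = n \<bullet> n" using Pc gorth[OF zc] RHS by simp
    have "cross3 c n = (c \<bullet> z) *\<^sub>R e - (c \<bullet> e) *\<^sub>R z" unfolding n_def by (rule Lagrange)
    then have cn: "cross3 n c = 0" using zc ce by (metis cross_skew inner_commute minus_zero scaleR_zero_left diff_zero)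
    have "cross3 n (cross3 n c) = (n \<bullet> c) *\<^sub>R n - (n \<bullet> n) *\<^sub>R c" by (rule Lagrange)
    then have ncn: "(n \<bullet> n) *\<^sub>R c = (n \<bullet> c) *\<^sub>R n" using cn by simp
    show "c = n"
    proof (cases "n = 0")
      case True
      then show ?thesis using cc by simp
    next
      case False
      define k where "k = (n \<bullet> c) / (n \<bullet> n)"
      have nn0: "n \<bullet> n > 0" using False by simp
      have "c = (1 / (n \<bullet> n)) *\<^sub>R ((n \<bullet> n) *\<^sub>R c)" using nn0 by simp
      also have "\<dots> = k *\<^sub>R n" unfolding ncn k_def by simp
      finally have ck: "c = k *\<^sub>R n" .
      have "k^2 * (n \<bullet> n) = n \<bullet> n" using cc ck by (simp add: power2_eq_square)
      then have k2: "k^2 = 1" using nn0 by simp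
      have "det (vector [e, b, c] :: real^3^3) > 0" using Pc indep False by blast
      then have "F * (k * (n \<bullet> n)) > 0" using det ck by simp
      then have "k > 0" using F0 nn0 by (simp add: zero_less_mult_iff)
      then show ?thesis using k2 ck by (auto simp: power2_eq_1_iff)
    qed
  qed
  have "(THE c. ?P c) = n" using Pn uniq by (rule the_equality[where P = ?P])
  then show ?thesis by (simp only: metric_cross_def n_def b_def g_def F_def eq_commute)
qed

theorem lemma8:
  fixes f :: "real \<Rightarrow> real" and I :: "real set"
    and r :: "real^2 \<Rightarrow> real^3" and S :: "(real^2) set" and \<alpha> :: 3
  assumes "open I" and "I \<subseteq> {0<..}"
    and "\<forall>n. \<forall>t\<in>I. (deriv ^^ n) f field_differentiable (at t)"
    and "\<forall>t\<in>I. f t > 0"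
    and "open S"
    and "\<forall>x\<in>S. r differentiable (at x)"
    and "\<forall>x\<in>S. inj (frechet_derivative r (at x))"
    and "\<forall>x\<in>S. norm (r x) \<in> I"
  shows "(\<forall>x\<in>S. \<forall>i j.
            warped_metric f (r x) (surf_partial r x i)
               (lc_deriv (warped_metric f) (\<lambda>z. cross3 (axis \<alpha> 1) z) (r x) (surf_partial r x j))
          + warped_metric f (r x) (surf_partial r x j)
               (lc_deriv (warped_metric f) (\<lambda>z. cross3 (axis \<alpha> 1) z) (r x) (surf_partial r x i))
          = 0)
      \<and> (\<forall>z. norm z \<in> I \<longrightarrow>
            cross3 (axis \<alpha> 1) z
            = metric_cross (warped_metric f) z (axis \<alpha> 1) (f (norm z) *\<^sub>R z))"
proof -
  have fd: "f field_differentiable (at t)" if "t \<in> I" for t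
    using assms(3) that by (metis funpow_0)
  have pos: "norm z \<in> I \<Longrightarrow> norm z > 0 \<and> f (norm z) > 0" for z :: "real^3"
    using assms(2,4) by auto
  show ?thesis
  proof (intro conjI ballI allI impI)
    fix x i j assume "x \<in> S"
    then have "norm (r x) \<in> I" using assms(8) by blast
    then show "warped_metric f (r x) (surf_partial r x i)
               (lc_deriv (warped_metric f) (\<lambda>z. cross3 (axis \<alpha> 1) z) (r x) (surf_partial r x j))
          + warped_metric f (r x) (surf_partial r x j)
               (lc_deriv (warped_metric f) (\<lambda>z. cross3 (axis \<alpha> 1) z) (r x) (surf_partial r x i))
          = 0"
      using killing fd pos by blast
  next
    fix z :: "real^3" assume "norm z \<in> I"
    then show "cross3 (axis \<alpha> 1) z
            = metric_cross (warped_metric f) z (axis \<alpha> 1) (f (norm z) *\<^sub>R z)"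
      using part2 pos by blast
  qed
qed

end
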